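(* For every graph $G$ and every integer $t\ge 1$, $f^-(t\cdot K_1+G)=f^-(G)$ and $f^+(t\cdot K_1+G)=f^+(G)$, where $t\cdot K_1$ denotes the edgeless graph on $t$ vertices.
   Context: All graphs are finite, simple, undirected and connected (except the edgeless graph $t\cdot K_1$ used in the join). $N[v]=N(v)\cup\{v\}$ is the closed neighbourhood. A chromatic colouring of $G$ is a proper vertex colouring $c:V(G)\to\{c_1,\dots,c_{\chi(G)}\}$. With respect to $c$, a vertex $v$ yields a rainbow neighbourhood if $N[v]$ contains a vertex of each colour $c_1,\dots,c_{\chi(G)}$; $r_\chi(G)$ is the number of such vertices, and $r^-_\chi(G)$, $r^+_\chi(G)$ are its minimum and maximum over all chromatic colourings of $G$. Fading: for a set $F\subseteq V(G)$ (a fade set), the vertices of $F$ receive a transparent colour $c^\circ$ not among $c_1,\dots,c_{\chi(G)}$; after fading, $v$ yields a rainbow neighbourhood iff for every $i$ some vertex of $N[v]\setminus F$ has colour $c_i$. The fading number $f^-(G)$ is the maximum $|F|$ over chromatic colourings $c$ attaining $r_\chi=r^-_\chi(G)$ and fade sets $F$ such that, after fading $F$, the number of vertices yielding rainbow neighbourhoods is still $r^-_\chi(G)$; $f^+(G)$ is defined analogously with $r^+_\chi(G)$. The join $G_1+G_2$ of vertex-disjoint graphs is $G_1\cup G_2$ together with all edges joining a vertex of $G_1$ to a vertex of $G_2$. *)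

theory Defs
  imports Main
begin

record 'a graph =
  verts :: "'a set"
  adj :: "'a \<Rightarrow> 'a \<Rightarrow> bool"

definition simple_graph :: "'a graph \<Rightarrow> bool" where
  "simple_graph G \<longleftrightarrow> finite (verts G)
     \<and> (\<forall>u v. adj G u v \<longrightarrow> u \<in> verts G \<and> v \<in> verts G)
     \<and> (\<forall>u v. adj G u v \<longrightarrow> adj G v u)
     \<and> (\<forall>v. \<not> adj G v v)"

definition connected_graph :: "'a graph \<Rightarrow> bool" where
  "connected_graph G \<longleftrightarrow> verts G \<noteq> {}
     \<and> (\<forall>u\<in>verts G. \<forall>v\<in>verts G. (adj G)\<^sup>*\<^sup>* u v)"

definition edgeless :: "nat \<Rightarrow> nat graph" where
  "edgeless t = \<lparr> verts = {..<t}, adj = (\<lambda>_ _. False) \<rparr>"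

definition join :: "'a graph \<Rightarrow> 'b graph \<Rightarrow> ('a + 'b) graph" where
  "join G1 G2 = \<lparr> verts = Inl ` verts G1 \<union> Inr ` verts G2,
     adj = (\<lambda>x y. case (x, y) of
              (Inl a, Inl b) \<Rightarrow> adj G1 a b
            | (Inr a, Inr b) \<Rightarrow> adj G2 a b
            | (Inl a, Inr b) \<Rightarrow> a \<in> verts G1 \<and> b \<in> verts G2
            | (Inr a, Inl b) \<Rightarrow> a \<in> verts G2 \<and> b \<in> verts G1) \<rparr>"

definition closed_nbhd :: "'a graph \<Rightarrow> 'a \<Rightarrow> 'a set" where
  "closed_nbhd G v = {u \<in> verts G. adj G v u} \<union> {v}"

definition proper_colouring :: "'a graph \<Rightarrow> ('a \<Rightarrow> nat) \<Rightarrow> nat \<Rightarrow> bool" where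
  "proper_colouring G c k \<longleftrightarrow> (\<forall>v\<in>verts G. c v < k)
     \<and> (\<forall>u\<in>verts G. \<forall>v\<in>verts G. adj G u v \<longrightarrow> c u \<noteq> c v)"

definition chromatic_number :: "'a graph \<Rightarrow> nat" where
  "chromatic_number G = (LEAST k. \<exists>c. proper_colouring G c k)"

definition chromatic_colouring :: "'a graph \<Rightarrow> ('a \<Rightarrow> nat) \<Rightarrow> bool" where
  "chromatic_colouring G c \<longleftrightarrow> proper_colouring G c (chromatic_number G)"

definition rainbow_faded :: "'a graph \<Rightarrow> ('a \<Rightarrow> nat) \<Rightarrow> 'a set \<Rightarrow> 'a \<Rightarrow> bool" where
  "rainbow_faded G c F v \<longleftrightarrow>
     (\<forall>i < chromatic_number G. \<exists>u \<in> closed_nbhd G v - F. c u = i)"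

definition r_chi_faded :: "'a graph \<Rightarrow> ('a \<Rightarrow> nat) \<Rightarrow> 'a set \<Rightarrow> nat" where
  "r_chi_faded G c F = card {v \<in> verts G. rainbow_faded G c F v}"

definition r_chi :: "'a graph \<Rightarrow> ('a \<Rightarrow> nat) \<Rightarrow> nat" where
  "r_chi G c = r_chi_faded G c {}"

definition r_chi_minus :: "'a graph \<Rightarrow> nat" where
  "r_chi_minus G = Min {r_chi G c | c. chromatic_colouring G c}"

definition r_chi_plus :: "'a graph \<Rightarrow> nat" where
  "r_chi_plus G = Max {r_chi G c | c. chromatic_colouring G c}"

definition fading_minus :: "'a graph \<Rightarrow> nat" where
  "fading_minus G = Max {card F | c F. chromatic_colouring G c
      \<and> r_chi G c = r_chi_minus G \<and> F \<subseteq> verts G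
      \<and> r_chi_faded G c F = r_chi_minus G}"

definition fading_plus :: "'a graph \<Rightarrow> nat" where
  "fading_plus G = Max {card F | c F. chromatic_colouring G c
      \<and> r_chi G c = r_chi_plus G \<and> F \<subseteq> verts G
      \<and> r_chi_faded G c F = r_chi_plus G}"

end

theory Submission
  imports Defs
begin


lemma colourable:
  assumes "simple_graph G"
  shows "\<exists>c. proper_colouring G c (chromatic_number G)"
proof -
  have fin: "finite (verts G)" using assms by (simp add: simple_graph_def)
  obtain f and n :: nat where f: "f ` verts G = {i. i < n}" "inj_on f (verts G)"
    using finite_imp_inj_to_nat_seg[OF fin] by blast
  have "proper_colouring G f n"
    unfolding proper_colouring_def
  proof (intro conjI ballI impI)
    fix v assume "v \<in> verts G" thus "f v < n" using f(1) by blast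
  next
    fix u v assume uv: "u \<in> verts G" "v \<in> verts G" "adj G u v"
    hence "u \<noteq> v" using assms by (auto simp: simple_graph_def)
    thus "f u \<noteq> f v" using f(2) uv by (meson inj_onD)
  qed
  hence "\<exists>k c. proper_colouring G c k" by blast
  thus ?thesis unfolding chromatic_number_def by (rule LeastI_ex)
qed

lemma chi_le: "proper_colouring G c k \<Longrightarrow> chromatic_number G \<le> k"
  unfolding chromatic_number_def by (rule Least_le) blast

lemma closed_nbhd_sub: "v \<in> verts G \<Longrightarrow> closed_nbhd G v \<subseteq> verts G"
  by (auto simp: closed_nbhd_def)

lemma in_closed_nbhd: "v \<in> closed_nbhd G v"
  by (auto simp: closed_nbhd_def)

lemma rainbow_exists:
  assumes sg: "simple_graph G" and ne: "verts G \<noteq> {}" and cc: "chromatic_colouring G c"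
  shows "\<exists>v\<in>verts G. rainbow_faded G c {} v"
proof (rule ccontr)
  define k where "k = chromatic_number G"
  assume "\<not> ?thesis"
  hence miss: "\<forall>v\<in>verts G. \<exists>i<k. \<forall>u\<in>closed_nbhd G v. c u \<noteq> i"
    by (auto simp: rainbow_faded_def k_def)
  have pc: "proper_colouring G c k" using cc by (simp add: chromatic_colouring_def k_def)
  obtain v0 where "v0 \<in> verts G" using ne by blast
  hence k1: "k \<ge> 1" using pc by (auto simp: proper_colouring_def)
  define d where "d v = (if c v = k - 1 then (SOME i. i<k \<and> (\<forall>u\<in>closed_nbhd G v. c u \<noteq> i)) else c v)" for v
  have dk: "d v < k \<and> (\<forall>u\<in>closed_nbhd G v. c u \<noteq> d v)" if "v \<in> verts G" "c v = k - 1" for v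
  proof -
    have "\<exists>i. i<k \<and> (\<forall>u\<in>closed_nbhd G v. c u \<noteq> i)" using miss that by blast
    from someI_ex[OF this] show ?thesis using that by (simp add: d_def)
  qed
  have "proper_colouring G d (k - 1)"
    unfolding proper_colouring_def
  proof (intro conjI ballI impI)
    fix v assume v: "v \<in> verts G"
    show "d v < k - 1"
    proof (cases "c v = k - 1")
      case True
      have "d v < k" "c v \<noteq> d v" using dk[OF v True] in_closed_nbhd[of v G] by blast+
      thus ?thesis using True by linarith
    next
      case False
      with pc v show ?thesis by (auto simp: proper_colouring_def d_def)
    qed
  next
    fix u v assume uv: "u \<in> verts G" "v \<in> verts G" "adj G u v"
    hence vu: "adj G v u" using sg by (auto simp: simple_graph_def)
    have cuv: "c u \<noteq> c v" using pc uv by (auto simp: proper_colouring_def)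
    have "v \<in> closed_nbhd G u" "u \<in> closed_nbhd G v" using uv vu by (auto simp: closed_nbhd_def)
    note nb = this
    show "d u \<noteq> d v"
    proof (cases "c u = k - 1"; cases "c v = k - 1")
      assume "c u = k - 1" "c v = k - 1" thus ?thesis using cuv by simp
    next
      assume a: "c u = k - 1" "c v \<noteq> k - 1"
      hence "d v = c v" by (simp add: d_def)
      thus ?thesis using dk[OF uv(1) a(1)] nb(1) by metis
    next
      assume a: "c u \<noteq> k - 1" "c v = k - 1"
      hence "d u = c u" by (simp add: d_def)
      thus ?thesis using dk[OF uv(2) a(2)] nb(2) by metis
    next
      assume a: "c u \<noteq> k - 1" "c v \<noteq> k - 1"
      thus ?thesis using cuv by (simp add: d_def)
    qed
  qed
  hence "k \<le> k - 1" using chi_le k_def by blast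
  thus False using k1 by simp
qed

lemma all_colours_used:
  assumes "simple_graph G" "verts G \<noteq> {}" "chromatic_colouring G c" "i < chromatic_number G"
  shows "\<exists>u\<in>verts G. c u = i"
proof -
  obtain v where v: "v \<in> verts G" "rainbow_faded G c {} v" using rainbow_exists assms by blast
  then obtain u where "u \<in> closed_nbhd G v" "c u = i" using assms(4) by (auto simp: rainbow_faded_def)
  thus ?thesis using closed_nbhd_sub[OF v(1)] by blast
qed

lemma rainbow_cong:
  assumes "\<forall>u\<in>verts G. c u = d u" "v \<in> verts G"
  shows "rainbow_faded G c F v = rainbow_faded G d F v"
proof -
  have e: "c u = d u" if "u \<in> closed_nbhd G v - F" for u
  proof -
    have "u \<in> verts G" using that closed_nbhd_sub[OF assms(2)] by blast
    thus ?thesis using assms(1) by simp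
  qed
  show ?thesis unfolding rainbow_faded_def
  proof (intro iffI allI impI)
    fix i assume h: "\<forall>i<chromatic_number G. \<exists>u\<in>closed_nbhd G v - F. c u = i" "i < chromatic_number G"
    then obtain u where "u \<in> closed_nbhd G v - F" "c u = i" by blast
    thus "\<exists>u\<in>closed_nbhd G v - F. d u = i" using e by force
  next
    fix i assume h: "\<forall>i<chromatic_number G. \<exists>u\<in>closed_nbhd G v - F. d u = i" "i < chromatic_number G"
    then obtain u where "u \<in> closed_nbhd G v - F" "d u = i" by blast
    thus "\<exists>u\<in>closed_nbhd G v - F. c u = i" using e by force
  qed
qed

lemma r_chi_faded_cong:
  assumes "\<forall>u\<in>verts G. c u = d u"
  shows "r_chi_faded G c F = r_chi_faded G d F"
proof -
  have "{v \<in> verts G. rainbow_faded G c F v} = {v \<in> verts G. rainbow_faded G d F v}"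
    using rainbow_cong[OF assms] by blast
  thus ?thesis unfolding r_chi_faded_def by simp
qed

lemma rainbow_mono: "F1 \<subseteq> F2 \<Longrightarrow> rainbow_faded G c F2 v \<Longrightarrow> rainbow_faded G c F1 v"
  unfolding rainbow_faded_def by blast



abbreviation JJ :: "nat \<Rightarrow> 'a graph \<Rightarrow> (nat + 'a) graph" where
  "JJ t G \<equiv> join (edgeless t) G"

definition sw :: "nat \<Rightarrow> nat \<Rightarrow> nat \<Rightarrow> nat" where
  "sw a b x = (if x = a then b else if x = b then a else x)"

definition res :: "(nat + 'a \<Rightarrow> nat) \<Rightarrow> nat \<Rightarrow> 'a \<Rightarrow> nat" where
  "res c m v = sw (c (Inl 0)) m (c (Inr v))"

definition extc :: "('a \<Rightarrow> nat) \<Rightarrow> nat \<Rightarrow> nat + 'a \<Rightarrow> nat" where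
  "extc c k x = (case x of Inl _ \<Rightarrow> k | Inr v \<Rightarrow> c v)"

lemma sw_inj: "sw a b x = sw a b y \<Longrightarrow> x = y"
  by (auto simp: sw_def split: if_splits)

lemma sw_sw[simp]: "sw a b (sw a b x) = x"
  by (auto simp: sw_def)

lemma sw_same[simp]: "sw a a x = x"
  by (auto simp: sw_def)

lemma sw_lt: "x < m \<Longrightarrow> x \<noteq> j \<Longrightarrow> j < m \<Longrightarrow> sw j (m - 1) x < m - 1"
  by (auto simp: sw_def)

lemma verts_J: "verts (JJ t G) = Inl ` {..<t} \<union> Inr ` verts G"
  by (simp add: join_def edgeless_def)

lemma adj_J[simp]:
  "adj (JJ t G) (Inl a) (Inl b) = False"
  "adj (JJ t G) (Inr x) (Inr y) = adj G x y"
  "adj (JJ t G) (Inl a) (Inr y) = (a < t \<and> y \<in> verts G)"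
  "adj (JJ t G) (Inr x) (Inl b) = (x \<in> verts G \<and> b < t)"
  by (simp_all add: join_def edgeless_def)

lemma cn_Inl: "i < t \<Longrightarrow> closed_nbhd (JJ t G) (Inl i) = insert (Inl i) (Inr ` verts G)"
  unfolding closed_nbhd_def verts_J by (auto simp del: adj_J simp: join_def edgeless_def)

lemma cn_Inr:
  assumes "simple_graph G" "v \<in> verts G"
  shows "closed_nbhd (JJ t G) (Inr v) = Inl ` {..<t} \<union> Inr ` closed_nbhd G v"
proof -
  have "\<And>u. adj G v u \<Longrightarrow> u \<in> verts G" using assms(1) by (auto simp: simple_graph_def)
  thus ?thesis unfolding closed_nbhd_def verts_J using assms(2)
    by (auto simp del: adj_J simp: join_def edgeless_def)
qed

lemma extc_proper:
  assumes "proper_colouring G c k"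
  shows "proper_colouring (JJ t G) (extc c k) (k + 1)"
  unfolding proper_colouring_def
proof (intro conjI ballI impI)
  fix v assume "v \<in> verts (JJ t G)"
  thus "extc c k v < k + 1" using assms unfolding verts_J
    by (auto simp: extc_def proper_colouring_def)
next
  fix u v assume uv: "u \<in> verts (JJ t G)" "v \<in> verts (JJ t G)" "adj (JJ t G) u v"
  show "extc c k u \<noteq> extc c k v"
  proof (cases u; cases v)
    fix a b assume "u = Inl a" "v = Inl b" thus ?thesis using uv by simp
  next
    fix a y assume "u = Inl a" "v = Inr y" thus ?thesis using uv assms
      by (auto simp: extc_def proper_colouring_def verts_J)
  next
    fix x b assume "u = Inr x" "v = Inl b" thus ?thesis using uv assms
      by (auto simp: extc_def proper_colouring_def verts_J)
  next
    fix x y assume "u = Inr x" "v = Inr y" thus ?thesis using uv assms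
      by (auto simp: extc_def proper_colouring_def verts_J)
  qed
qed

lemma res_proper:
  assumes pc: "proper_colouring (JJ t G) c m" and t: "t \<ge> 1"
  shows "proper_colouring G (res c (m - 1)) (m - 1)"
    and "c (Inl 0) < m"
    and "\<forall>v\<in>verts G. c (Inr v) \<noteq> c (Inl 0) \<and> c (Inr v) < m"
proof -
  have i0: "Inl 0 \<in> verts (JJ t G)" using t by (simp add: verts_J)
  show j0: "c (Inl 0) < m" using pc i0 by (simp add: proper_colouring_def)
  show vv: "\<forall>v\<in>verts G. c (Inr v) \<noteq> c (Inl 0) \<and> c (Inr v) < m"
  proof
    fix v assume v: "v \<in> verts G"
    hence vJ: "Inr v \<in> verts (JJ t G)" by (simp add: verts_J)
    have "adj (JJ t G) (Inl 0) (Inr v)" using t v by simp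
    thus "c (Inr v) \<noteq> c (Inl 0) \<and> c (Inr v) < m"
      using pc i0 vJ unfolding proper_colouring_def by metis
  qed
  show "proper_colouring G (res c (m - 1)) (m - 1)"
    unfolding proper_colouring_def
  proof (intro conjI ballI impI)
    fix v assume "v \<in> verts G"
    thus "res c (m - 1) v < m - 1" using vv j0 sw_lt unfolding res_def by blast
  next
    fix u v assume uv: "u \<in> verts G" "v \<in> verts G" "adj G u v"
    hence "c (Inr u) \<noteq> c (Inr v)" using pc unfolding proper_colouring_def verts_J
      by (metis UnI2 adj_J(2) imageI)
    thus "res c (m - 1) u \<noteq> res c (m - 1) v" unfolding res_def using sw_inj by metis
  qed
qed



lemma chi_J:
  assumes sg: "simple_graph G" and t: "t \<ge> 1"
  shows "chromatic_number (JJ t G) = chromatic_number G + 1"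
proof -
  define k where "k = chromatic_number G"
  obtain c where c: "proper_colouring G c k" using colourable[OF sg] unfolding k_def by blast
  have pJ: "proper_colouring (JJ t G) (extc c k) (k + 1)" by (rule extc_proper[OF c])
  hence le: "chromatic_number (JJ t G) \<le> k + 1" by (rule chi_le)
  have "\<exists>k c. proper_colouring (JJ t G) c k" using pJ by blast
  hence "\<exists>c. proper_colouring (JJ t G) c (chromatic_number (JJ t G))"
    unfolding chromatic_number_def by (rule LeastI_ex)
  then obtain c' where c': "proper_colouring (JJ t G) c' (chromatic_number (JJ t G))" by blast
  have "k \<le> chromatic_number (JJ t G) - 1"
    using chi_le[OF res_proper(1)[OF c' t]] k_def by simp
  moreover have "chromatic_number (JJ t G) \<ge> 1" using res_proper(2)[OF c' t] by simp
  ultimately show ?thesis using le k_def by simp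
qed

lemma colour_shift:
  assumes j0: "j0 \<le> k" and g: "\<forall>w\<in>W. g w \<noteq> j0 \<and> g w \<le> k"
  shows "(\<forall>l. l \<le> k \<and> l \<noteq> j0 \<longrightarrow> (\<exists>w\<in>W. g w = l)) \<longleftrightarrow> (\<forall>j<k. \<exists>w\<in>W. sw j0 k (g w) = j)"
proof
  assume h: "\<forall>l. l \<le> k \<and> l \<noteq> j0 \<longrightarrow> (\<exists>w\<in>W. g w = l)"
  show "\<forall>j<k. \<exists>w\<in>W. sw j0 k (g w) = j"
  proof (intro allI impI)
    fix j assume j: "j < k"
    have "sw j0 k j \<le> k \<and> sw j0 k j \<noteq> j0" using j j0 by (auto simp: sw_def)
    then obtain w where "w \<in> W" "g w = sw j0 k j" using h by blast
    thus "\<exists>w\<in>W. sw j0 k (g w) = j" by (metis sw_sw)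
  qed
next
  assume h: "\<forall>j<k. \<exists>w\<in>W. sw j0 k (g w) = j"
  show "\<forall>l. l \<le> k \<and> l \<noteq> j0 \<longrightarrow> (\<exists>w\<in>W. g w = l)"
  proof (intro allI impI)
    fix l assume l: "l \<le> k \<and> l \<noteq> j0"
    have "sw j0 k l < k" using l j0 by (auto simp: sw_def)
    then obtain w where "w \<in> W" "sw j0 k (g w) = sw j0 k l" using h by metis
    thus "\<exists>w\<in>W. g w = l" using sw_inj by metis
  qed
qed

lemma chromJ_facts:
  assumes sg: "simple_graph G" and ne: "verts G \<noteq> {}" and t: "t \<ge> 1"
    and cc: "chromatic_colouring (JJ t G) c"
  shows "c (Inl 0) \<le> chromatic_number G"
    and "\<forall>v\<in>verts G. c (Inr v) \<noteq> c (Inl 0) \<and> c (Inr v) \<le> chromatic_number G"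
    and "chromatic_colouring G (res c (chromatic_number G))"
    and "\<forall>i<t. c (Inl i) = c (Inl 0)"
proof -
  define k where "k = chromatic_number G"
  have pc: "proper_colouring (JJ t G) c (k + 1)"
    using cc chi_J[OF sg t] by (simp add: chromatic_colouring_def k_def)
  note r = res_proper[OF pc t]
  show j0: "c (Inl 0) \<le> chromatic_number G" using r(2) k_def by simp
  show vv: "\<forall>v\<in>verts G. c (Inr v) \<noteq> c (Inl 0) \<and> c (Inr v) \<le> chromatic_number G"
    using r(3) k_def by auto
  show ccG: "chromatic_colouring G (res c (chromatic_number G))"
    using r(1) by (simp add: chromatic_colouring_def k_def)
  have allc: "\<forall>j<k. \<exists>w\<in>verts G. sw (c (Inl 0)) k (c (Inr w)) = j"
    using all_colours_used[OF sg ne ccG] unfolding res_def k_def by blast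
  have used: "\<forall>l. l \<le> k \<and> l \<noteq> c (Inl 0) \<longrightarrow> (\<exists>w\<in>verts G. c (Inr w) = l)"
    using colour_shift[of "c (Inl 0)" k "verts G" "\<lambda>w. c (Inr w)"] j0 vv allc k_def by blast
  show "\<forall>i<t. c (Inl i) = c (Inl 0)"
  proof (intro allI impI)
    fix i assume i: "i < t"
    hence iJ: "Inl i \<in> verts (JJ t G)" by (simp add: verts_J)
    hence "c (Inl i) < k + 1" using pc unfolding proper_colouring_def by blast
    hence lt: "c (Inl i) \<le> k" by simp
    have "\<forall>w\<in>verts G. c (Inr w) \<noteq> c (Inl i)"
    proof
      fix w assume w: "w \<in> verts G"
      hence "Inr w \<in> verts (JJ t G)" by (simp add: verts_J)
      moreover have "adj (JJ t G) (Inl i) (Inr w)" using i w by simp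
      ultimately show "c (Inr w) \<noteq> c (Inl i)" using pc iJ unfolding proper_colouring_def by metis
    qed
    thus "c (Inl i) = c (Inl 0)" using used lt by blast
  qed
qed



locale JC =
  fixes G :: "'a graph" and t :: nat and c :: "nat + 'a \<Rightarrow> nat"
  assumes sg: "simple_graph G" and ne: "verts G \<noteq> {}" and t1: "t \<ge> 1"
    and cc: "chromatic_colouring (JJ t G) c"
begin

abbreviation "k \<equiv> chromatic_number G"
abbreviation "j0 \<equiv> c (Inl 0)"

lemma chiJ: "chromatic_number (JJ t G) = k + 1" by (rule chi_J[OF sg t1])
lemma j0k: "j0 \<le> k" by (rule chromJ_facts(1)[OF sg ne t1 cc])
lemma vv: "\<forall>v\<in>verts G. c (Inr v) \<noteq> j0 \<and> c (Inr v) \<le> k" by (rule chromJ_facts(2)[OF sg ne t1 cc])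
lemma ccG: "chromatic_colouring G (res c k)" by (rule chromJ_facts(3)[OF sg ne t1 cc])
lemma inl: "i < t \<Longrightarrow> c (Inl i) = j0" using chromJ_facts(4)[OF sg ne t1 cc] by blast

lemma key_rain:
  assumes A: "A \<subseteq> Inl ` {..<t}" "A \<noteq> {}" and W: "W \<subseteq> verts G"
  shows "(\<forall>l<chromatic_number (JJ t G). \<exists>u\<in>A \<union> Inr ` W. c u = l)
     \<longleftrightarrow> (\<forall>j<k. \<exists>w\<in>W. res c k w = j)"
proof -
  have gW: "\<forall>w\<in>W. c (Inr w) \<noteq> j0 \<and> c (Inr w) \<le> k" using vv W by (meson subsetD)
  have cA: "c a = j0" if aA: "a \<in> A" for a
  proof -
    obtain i where "i < t" "a = Inl i" using A(1) aA by auto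
    thus ?thesis using inl by metis
  qed
  have "(\<forall>l<chromatic_number (JJ t G). \<exists>u\<in>A \<union> Inr ` W. c u = l)
     \<longleftrightarrow> (\<forall>l. l \<le> k \<and> l \<noteq> j0 \<longrightarrow> (\<exists>w\<in>W. c (Inr w) = l))"
  proof
    assume h: "\<forall>l<chromatic_number (JJ t G). \<exists>u\<in>A \<union> Inr ` W. c u = l"
    show "\<forall>l. l \<le> k \<and> l \<noteq> j0 \<longrightarrow> (\<exists>w\<in>W. c (Inr w) = l)"
    proof (intro allI impI)
      fix l assume l: "l \<le> k \<and> l \<noteq> j0"
      hence "l < chromatic_number (JJ t G)" using chiJ by simp
      then obtain u where u: "u \<in> A \<union> Inr ` W" "c u = l" using h by blast
      have "u \<notin> A" using cA u(2) l by metis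
      then obtain w where "w \<in> W" "u = Inr w" using u(1) by auto
      thus "\<exists>w\<in>W. c (Inr w) = l" using u(2) by auto
    qed
  next
    assume h: "\<forall>l. l \<le> k \<and> l \<noteq> j0 \<longrightarrow> (\<exists>w\<in>W. c (Inr w) = l)"
    show "\<forall>l<chromatic_number (JJ t G). \<exists>u\<in>A \<union> Inr ` W. c u = l"
    proof (intro allI impI)
      fix l assume l: "l < chromatic_number (JJ t G)"
      show "\<exists>u\<in>A \<union> Inr ` W. c u = l"
      proof (cases "l = j0")
        case True
        obtain a where "a \<in> A" using A(2) by blast
        thus ?thesis using cA True by auto
      next
        case False
        hence "l \<le> k" using l chiJ by simp
        then obtain w where "w \<in> W" "c (Inr w) = l" using h False by blast
        thus ?thesis by blast
      qed
    qed
  qed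
  also have "\<dots> \<longleftrightarrow> (\<forall>j<k. \<exists>w\<in>W. sw j0 k (c (Inr w)) = j)"
    by (rule colour_shift[OF j0k gW])
  finally show ?thesis unfolding res_def .
qed

lemma rain_Inr:
  assumes v: "v \<in> verts G"
  shows "rainbow_faded (JJ t G) c (Inr ` F) (Inr v) \<longleftrightarrow> rainbow_faded G (res c k) F v"
proof -
  have e: "closed_nbhd (JJ t G) (Inr v) - Inr ` F = Inl ` {..<t} \<union> Inr ` (closed_nbhd G v - F)"
    unfolding cn_Inr[OF sg v] by auto
  have "Inl 0 \<in> Inl ` {..<t}" using t1 by simp
  hence A: "Inl ` {..<t} \<noteq> {}" by (metis empty_iff)
  have W: "closed_nbhd G v - F \<subseteq> verts G" by (rule subset_trans[OF Diff_subset closed_nbhd_sub[OF v]])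
  show ?thesis unfolding rainbow_faded_def e by (rule key_rain[OF subset_refl A W])
qed

lemma rain_Inl:
  assumes i: "i < t"
  shows "rainbow_faded (JJ t G) c (Inr ` F) (Inl i) \<longleftrightarrow> (\<forall>j<k. \<exists>w\<in>verts G - F. res c k w = j)"
proof -
  have e: "closed_nbhd (JJ t G) (Inl i) - Inr ` F = {Inl i} \<union> Inr ` (verts G - F)"
    unfolding cn_Inl[OF i] by auto
  have A: "{Inl i} \<subseteq> Inl ` {..<t}" using i by blast
  have W: "verts G - F \<subseteq> verts G" by blast
  have ne': "{Inl i} \<noteq> {}" by simp
  show ?thesis unfolding rainbow_faded_def e by (rule key_rain[OF A ne' W])
qed

lemma rain_Inl_faded:
  assumes i: "i < t" and f: "Inl i \<in> F'"
  shows "\<not> rainbow_faded (JJ t G) c F' (Inl i)"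
proof
  assume "rainbow_faded (JJ t G) c F' (Inl i)"
  moreover have "j0 < chromatic_number (JJ t G)" using j0k chiJ by simp
  ultimately obtain u where u: "u \<in> closed_nbhd (JJ t G) (Inl i) - F'" "c u = j0"
    unfolding rainbow_faded_def by blast
  hence "u \<in> Inr ` verts G" using f unfolding cn_Inl[OF i] by blast
  then obtain w where "w \<in> verts G" "u = Inr w" by blast
  thus False using u(2) vv by blast
qed

lemma count:
  assumes cond: "\<forall>j<k. \<exists>w\<in>verts G - F. res c k w = j"
  shows "r_chi_faded (JJ t G) c (Inr ` F) = t + r_chi_faded G (res c k) F"
proof -
  let ?R = "{v \<in> verts G. rainbow_faded G (res c k) F v}"
  have "{x \<in> verts (JJ t G). rainbow_faded (JJ t G) c (Inr ` F) x} = Inl ` {..<t} \<union> Inr ` ?R"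
  proof (intro equalityI subsetI)
    fix x assume x: "x \<in> {x \<in> verts (JJ t G). rainbow_faded (JJ t G) c (Inr ` F) x}"
    show "x \<in> Inl ` {..<t} \<union> Inr ` ?R"
    proof (cases x)
      case (Inl i)
      have "Inl i \<in> verts (JJ t G)" using x Inl by simp
      hence "i < t" by (auto simp: verts_J)
      thus ?thesis using Inl by simp
    next
      case (Inr v)
      have "Inr v \<in> verts (JJ t G)" using x Inr by simp
      hence v: "v \<in> verts G" by (auto simp: verts_J)
      have "rainbow_faded (JJ t G) c (Inr ` F) (Inr v)" using x Inr by simp
      hence "v \<in> ?R" using rain_Inr[OF v] v by simp
      thus ?thesis using Inr by simp
    qed
  next
    fix x assume x: "x \<in> Inl ` {..<t} \<union> Inr ` ?R"
    show "x \<in> {x \<in> verts (JJ t G). rainbow_faded (JJ t G) c (Inr ` F) x}"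
    proof (cases x)
      case (Inl i)
      hence i: "i < t" using x by auto
      have "rainbow_faded (JJ t G) c (Inr ` F) (Inl i)" using rain_Inl[OF i] cond by simp
      moreover have "Inl i \<in> verts (JJ t G)" using i by (simp add: verts_J)
      ultimately show ?thesis using Inl by simp
    next
      case (Inr v)
      hence "v \<in> ?R" using x by auto
      hence v: "v \<in> verts G" "rainbow_faded G (res c k) F v" by simp_all
      have "rainbow_faded (JJ t G) c (Inr ` F) (Inr v)" using rain_Inr[OF v(1)] v(2) by simp
      moreover have "Inr v \<in> verts (JJ t G)" using v by (simp add: verts_J)
      ultimately show ?thesis using Inr by simp
    qed
  qed
  moreover have fR: "finite ?R" using sg by (simp add: simple_graph_def)
  moreover have "card (Inl ` {..<t} \<union> Inr ` ?R) = t + card ?R"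
  proof -
    have "card (Inl ` {..<t} \<union> Inr ` ?R) = card (Inl ` {..<t} :: (nat + 'a) set) + card (Inr ` ?R :: (nat + 'a) set)"
      by (rule card_Un_disjoint) (use fR in auto)
    also have "card (Inl ` {..<t} :: (nat + 'a) set) = t" by (simp add: card_image)
    also have "card (Inr ` ?R :: (nat + 'a) set) = card ?R" by (simp add: card_image)
    finally show ?thesis .
  qed
  ultimately show ?thesis unfolding r_chi_faded_def by simp
qed

lemma r_chi_J: "r_chi (JJ t G) c = t + r_chi G (res c k)"
proof -
  have "\<forall>j<k. \<exists>w\<in>verts G - {}. res c k w = j" using all_colours_used[OF sg ne ccG] by simp
  from count[OF this] show ?thesis unfolding r_chi_def by simp
qed

end



definition fadeset :: "'b graph \<Rightarrow> nat \<Rightarrow> nat set" where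
  "fadeset X m = {card F |c F. chromatic_colouring X c \<and> r_chi X c = m \<and> F \<subseteq> verts X
      \<and> r_chi_faded X c F = m}"

lemma fading_minus_alt: "fading_minus X = Max (fadeset X (r_chi_minus X))"
  by (simp add: fading_minus_def fadeset_def)

lemma fading_plus_alt: "fading_plus X = Max (fadeset X (r_chi_plus X))"
  by (simp add: fading_plus_def fadeset_def)

lemma extc_chrom:
  assumes sg: "simple_graph G" and t: "t \<ge> 1" and cc: "chromatic_colouring G c0"
  shows "chromatic_colouring (JJ t G) (extc c0 (chromatic_number G))"
  using extc_proper[of G c0 "chromatic_number G" t] cc chi_J[OF sg t]
  by (simp add: chromatic_colouring_def)

lemma res_extc: "res (extc c0 k) k v = c0 v"
  by (simp add: res_def extc_def)

lemma r_chi_cong: "\<forall>u\<in>verts G. c u = d u \<Longrightarrow> r_chi G c = r_chi G d"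
  unfolding r_chi_def by (rule r_chi_faded_cong)

lemma SJ:
  assumes sg: "simple_graph G" and ne: "verts G \<noteq> {}" and t: "t \<ge> 1"
  shows "{r_chi (JJ t G) c |c. chromatic_colouring (JJ t G) c}
       = (\<lambda>x. t + x) ` {r_chi G c |c. chromatic_colouring G c}"
proof (intro equalityI subsetI)
  fix n assume "n \<in> {r_chi (JJ t G) c |c. chromatic_colouring (JJ t G) c}"
  then obtain c where c: "chromatic_colouring (JJ t G) c" "n = r_chi (JJ t G) c" by blast
  interpret JC G t c using sg ne t c(1) by unfold_locales
  have "n = t + r_chi G (res c k)" using c(2) r_chi_J by simp
  thus "n \<in> (\<lambda>x. t + x) ` {r_chi G c |c. chromatic_colouring G c}" using ccG by blast
next
  fix n assume "n \<in> (\<lambda>x. t + x) ` {r_chi G c |c. chromatic_colouring G c}"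
  then obtain c0 where c0: "chromatic_colouring G c0" "n = t + r_chi G c0" by blast
  define c where "c = extc c0 (chromatic_number G)"
  have cc: "chromatic_colouring (JJ t G) c" unfolding c_def by (rule extc_chrom[OF sg t c0(1)])
  interpret JC G t c using sg ne t cc by unfold_locales
  have "r_chi G (res c k) = r_chi G c0" by (rule r_chi_cong) (simp add: c_def res_extc)
  hence "n = r_chi (JJ t G) c" using c0(2) r_chi_J by simp
  thus "n \<in> {r_chi (JJ t G) c |c. chromatic_colouring (JJ t G) c}" using cc by blast
qed

lemma SG_fin_ne:
  assumes sg: "simple_graph G"
  shows "finite {r_chi G c |c. chromatic_colouring G c}" "{r_chi G c |c. chromatic_colouring G c} \<noteq> {}"
proof -
  have fin: "finite (verts G)" using sg by (simp add: simple_graph_def)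
  have "{r_chi G c |c. chromatic_colouring G c} \<subseteq> {..card (verts G)}"
  proof
    fix n assume "n \<in> {r_chi G c |c. chromatic_colouring G c}"
    then obtain c where "n = r_chi G c" by blast
    hence "n \<le> card (verts G)" unfolding r_chi_def r_chi_faded_def
      using card_mono[OF fin] by (metis (no_types, lifting) mem_Collect_eq subsetI)
    thus "n \<in> {..card (verts G)}" by simp
  qed
  thus "finite {r_chi G c |c. chromatic_colouring G c}" by (rule finite_subset) simp
  obtain c where "chromatic_colouring G c" using colourable[OF sg] by (auto simp: chromatic_colouring_def)
  hence "r_chi G c \<in> {r_chi G c |c. chromatic_colouring G c}" by blast
  thus "{r_chi G c |c. chromatic_colouring G c} \<noteq> {}" by (metis empty_iff)
qed

lemma rminus:
  assumes sg: "simple_graph G" and ne: "verts G \<noteq> {}" and t: "t \<ge> 1"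
  shows "r_chi_minus (JJ t G) = t + r_chi_minus G" and "r_chi_plus (JJ t G) = t + r_chi_plus G"
proof -
  have m: "mono (\<lambda>x::nat. t + x)" by (simp add: mono_def)
  show "r_chi_minus (JJ t G) = t + r_chi_minus G"
    unfolding r_chi_minus_def SJ[OF sg ne t] using mono_Min_commute[OF m SG_fin_ne[OF sg]] by simp
  show "r_chi_plus (JJ t G) = t + r_chi_plus G"
    unfolding r_chi_plus_def SJ[OF sg ne t] using mono_Max_commute[OF m SG_fin_ne[OF sg]] by simp
qed



lemma fade_J_sub:
  assumes sg: "simple_graph G" and ne: "verts G \<noteq> {}" and t: "t \<ge> 1"
  shows "fadeset (JJ t G) (t + m) \<subseteq> fadeset G m"
proof
  fix n assume "n \<in> fadeset (JJ t G) (t + m)"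
  then obtain c F' where c: "chromatic_colouring (JJ t G) c" "r_chi (JJ t G) c = t + m"
    "F' \<subseteq> verts (JJ t G)" "r_chi_faded (JJ t G) c F' = t + m" "n = card F'"
    unfolding fadeset_def by blast
  interpret JC G t c using sg ne t c(1) by unfold_locales
  define R0 where "R0 = {x \<in> verts (JJ t G). rainbow_faded (JJ t G) c {} x}"
  define RF where "RF = {x \<in> verts (JJ t G). rainbow_faded (JJ t G) c F' x}"
  have finJ: "finite (verts (JJ t G))" using sg by (simp add: verts_J simple_graph_def)
  have sub: "RF \<subseteq> R0" unfolding RF_def R0_def using rainbow_mono[of "{}" F'] by blast
  have "card RF = card R0" using c(2) c(4) unfolding RF_def R0_def r_chi_def r_chi_faded_def by simp
  hence RR: "RF = R0" using card_subset_eq[OF _ sub] finJ R0_def by (metis (no_types, lifting) finite_subset mem_Collect_eq subsetI)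
  have allc: "\<forall>j<k. \<exists>w\<in>verts G - {}. res c k w = j" using all_colours_used[OF sg ne ccG] by simp
  have inR0: "Inl i \<in> R0" if i: "i < t" for i
  proof -
    have "rainbow_faded (JJ t G) c (Inr ` {}) (Inl i)" using rain_Inl[OF i] allc by blast
    moreover have "Inl i \<in> verts (JJ t G)" using i by (simp add: verts_J)
    ultimately show ?thesis unfolding R0_def by simp
  qed
  have noInl: "Inl i \<notin> F'" if i: "i < t" for i
  proof
    assume "Inl i \<in> F'"
    hence "\<not> rainbow_faded (JJ t G) c F' (Inl i)" by (rule rain_Inl_faded[OF i])
    moreover have "Inl i \<in> RF" using RR inR0[OF i] by simp
    ultimately show False unfolding RF_def by simp
  qed
  define F where "F = {v. Inr v \<in> F'}"
  have FF: "F' = Inr ` F"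
  proof (intro equalityI subsetI)
    fix x assume x: "x \<in> F'"
    show "x \<in> Inr ` F"
    proof (cases x)
      case (Inl i)
      have "i < t" using x c(3) Inl by (auto simp: verts_J)
      thus ?thesis using noInl x Inl by simp
    next
      case (Inr v) thus ?thesis using x F_def by simp
    qed
  next
    fix x :: "nat + 'a" assume "x \<in> Inr ` F" thus "x \<in> F'" unfolding F_def by auto
  qed
  have FV: "F \<subseteq> verts G" using c(3) unfolding F_def by (auto simp: verts_J)
  have cardF: "n = card F" using c(5) FF by (simp add: card_image)
  have rG: "r_chi G (res c k) = m" using c(2) r_chi_J by simp
  have "Inl 0 \<in> RF" using RR inR0 t by simp
  hence "rainbow_faded (JJ t G) c (Inr ` F) (Inl 0)" unfolding RF_def FF by simp
  hence cond: "\<forall>j<k. \<exists>w\<in>verts G - F. res c k w = j" using rain_Inl[of 0 F] t by simp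
  have "r_chi_faded G (res c k) F = m" using count[OF cond] c(4) FF by simp
  thus "n \<in> fadeset G m" unfolding fadeset_def using ccG rG FV cardF by blast
qed

lemma fade_J_sup:
  assumes sg: "simple_graph G" and ne: "verts G \<noteq> {}" and t: "t \<ge> 1"
  shows "fadeset G m \<subseteq> fadeset (JJ t G) (t + m)"
proof
  fix n assume "n \<in> fadeset G m"
  then obtain c0 F where c0: "chromatic_colouring G c0" "r_chi G c0 = m"
    "F \<subseteq> verts G" "r_chi_faded G c0 F = m" "n = card F"
    unfolding fadeset_def by blast
  define c where "c = extc c0 (chromatic_number G)"
  have cc: "chromatic_colouring (JJ t G) c" unfolding c_def by (rule extc_chrom[OF sg t c0(1)])
  interpret JC G t c using sg ne t cc by unfold_locales
  have agree: "\<forall>u\<in>verts G. res c k u = c0 u" by (simp add: c_def res_extc)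
  have rG: "r_chi G (res c k) = m" using r_chi_cong[OF agree] c0(2) by simp
  have fG: "r_chi_faded G (res c k) F = m" using r_chi_faded_cong[OF agree] c0(4) by simp
  have finV: "finite (verts G)" using sg by (simp add: simple_graph_def)
  obtain v0 where v0: "v0 \<in> verts G" "rainbow_faded G c0 {} v0" using rainbow_exists[OF sg ne c0(1)] by blast
  have "v0 \<in> {v \<in> verts G. rainbow_faded G c0 {} v}" using v0 by simp
  moreover have "finite {v \<in> verts G. rainbow_faded G c0 {} v}" using finV by simp
  ultimately have "card {v \<in> verts G. rainbow_faded G c0 {} v} \<noteq> 0" using card_0_eq by (metis empty_iff)
  hence "m \<noteq> 0" using c0(2) unfolding r_chi_def r_chi_faded_def by simp
  hence "card {v \<in> verts G. rainbow_faded G c0 F v} \<noteq> 0" using c0(4) unfolding r_chi_faded_def by simp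
  then obtain v where v: "v \<in> verts G" "rainbow_faded G c0 F v" by (metis (no_types, lifting) Collect_empty_eq card.empty)
  have cond: "\<forall>j<k. \<exists>w\<in>verts G - F. res c k w = j"
  proof (intro allI impI)
    fix j assume "j < k"
    then obtain u where u: "u \<in> closed_nbhd G v - F" "c0 u = j" using v(2) unfolding rainbow_faded_def by blast
    have "u \<in> verts G" using u(1) closed_nbhd_sub[OF v(1)] by (meson DiffD1 subsetD)
    thus "\<exists>w\<in>verts G - F. res c k w = j" using u agree by (metis DiffD2 DiffI)
  qed
  have "r_chi_faded (JJ t G) c (Inr ` F) = t + m" using count[OF cond] fG by simp
  moreover have "Inr ` F \<subseteq> verts (JJ t G)" using c0(3) by (auto simp: verts_J)
  moreover have "r_chi (JJ t G) c = t + m" using r_chi_J rG by simp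
  moreover have "n = card (Inr ` F)" using c0(5) by (simp add: card_image)
  ultimately show "n \<in> fadeset (JJ t G) (t + m)" unfolding fadeset_def using cc by blast
qed

theorem mainTheorem9:
  fixes G :: "'a graph" and t :: nat
  assumes "simple_graph G" and "connected_graph G" and "t \<ge> 1"
  shows "fading_minus (join (edgeless t) G) = fading_minus G
       \<and> fading_plus (join (edgeless t) G) = fading_plus G"
proof -
  have ne: "verts G \<noteq> {}" using assms(2) by (simp add: connected_graph_def)
  have eq: "fadeset (JJ t G) (t + m) = fadeset G m" for m
    using fade_J_sub[OF assms(1) ne assms(3)] fade_J_sup[OF assms(1) ne assms(3)] by (rule equalityI)
  show ?thesis
    unfolding fading_minus_alt fading_plus_alt rminus[OF assms(1) ne assms(3)] eq by simp
qed


end
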